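(* Let $0<r<\infty$, $N\in\mathbb N$, and for each of the seven types $R_N=A_N,B_N,B_N^\vee,C_N,C_N^\vee,BC_N,D_N$ consider the determinantal point process whose correlation kernel at time $t\in(0,t_\ast)$ is $K_t^{R_N}(x,y;t_\ast,r)=\sum_{n=1}^N \frac{1}{m^{R_N}_n(t_\ast)}M^{R_N}_n(x,t)\overline{M^{R_N}_n(y,t_\ast-t)}$ (on $[0,2\pi r)$ for $A_N$, on $[0,\pi r]$ otherwise). Put $t=t_\ast/2$. In the limit $t_\ast\to\infty$, these seven determinantal point processes degenerate into four types of determinantal point processes, with correlation kernels $K^{A_N}(x,y;r)=\frac{1}{2\pi r}\frac{\sin\{N(x-y)/2r\}}{\sin\{(x-y)/2r\}}$, $x,y\in[0,2\pi r)$ (limit for $A_N$); $K^{B_N}(x,y;r)=\frac{1}{2\pi r}\Big[\frac{\sin\{N(x-y)/r\}}{\sin\{(x-y)/2r\}}-\frac{\sin\{N(x+y)/r\}}{\sin\{(x+y)/2r\}}\Big]$, $x,y\in[0,\pi r]$ (common limit for $B_N$, $BC_N$, $C_N^\vee$); $K^{C_N}(x,y;r)=\frac{1}{2\pi r}\Big[\frac{\sin\{(2N+1)(x-y)/2r\}}{\sin\{(x-y)/2r\}}-\frac{\sin\{(2N+1)(x+y)/2r\}}{\sin\{(x+y)/2r\}}\Big]$, $x,y\in[0,\pi r]$ (common limit for $C_N$, $B_N^\vee$); $K^{D_N}(x,y;r)=\frac{1}{2\pi r}\Big[\frac{\sin\{(2N-1)(x-y)/2r\}}{\sin\{(x-y)/2r\}}+\frac{\sin\{(2N-1)(x+y)/2r\}}{\sin\{(x+y)/2r\}}\Big]$,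 $x,y\in[0,\pi r]$ (limit for $D_N$).
   Context: Jacobi theta functions: $\vartheta_1(v;\tau)=2\sum_{n\ge1}(-1)^{n-1}e^{\tau\pi i(n-1/2)^2}\sin\{(2n-1)\pi v\}$, $\vartheta_2(v;\tau)=2\sum_{n\ge1}e^{\tau\pi i(n-1/2)^2}\cos\{(2n-1)\pi v\}$, $\Im\tau>0$. Set $\xi(x)=x/(2\pi r)$, $\tau(t)=it/(2\pi r^2)$. Let $J^{R_N}(j)=j-1/2$ for $A_N,C_N^\vee$; $j-1$ for $B_N,B_N^\vee,D_N$; $j$ for $C_N,BC_N$. Let $\mathcal N^{R_N}=N$ ($A_N$), $2N-1$ ($B_N$), $2N$ ($B_N^\vee,C_N^\vee$), $2(N+1)$ ($C_N$), $2N+1$ ($BC_N$), $2(N-1)$ ($D_N$). Writing $J=J^{R_N}(j)$, $\mathcal N=\mathcal N^{R_N}$: $M^{A_N}_j(x,t)=e^{2\pi iJ\xi(x)}\vartheta_2(\mathcal N\{J\tau(t)+\xi(x)\};\mathcal N^2\tau(t))$; for $B_N,B_N^\vee$: $M_j=e^{2\pi iJ\xi(x)}\vartheta_1(\mathcal N\{J\tau(t)+\xi(x)\};\mathcal N^2\tau(t))-e^{-2\pi iJ\xi(x)}\vartheta_1(\mathcal N\{J\tau(t)-\xi(x)\};\mathcal N^2\tau(t))$; for $C_N,C_N^\vee,BC_N$: same with $\vartheta_2$ in place of $\vartheta_1$; for $D_N$: same with $\vartheta_2$ and a plus sign between the two terms. The constants are $m_j^{R_N}(t_\ast)=2\pi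 r\,\vartheta_2(\mathcal N J\tau(t_\ast);\mathcal N^2\tau(t_\ast))$ for $A_N,C_N,C_N^\vee,BC_N$; for $B_N,B_N^\vee$ the same except $m_1=4\pi r\,\vartheta_2(0;\mathcal N^2\tau(t_\ast))$; for $D_N$ the same except $m_1=4\pi r\,\vartheta_2(0;\mathcal N^2\tau(t_\ast))$ and $m_N=4\pi r\,\vartheta_2(\mathcal N(N-1)\tau(t_\ast);\mathcal N^2\tau(t_\ast))$. The point process has density on the Weyl alcove proportional to $\det_{j,k}[\overline{M_j^{R_N}(x_k,t_\ast-t)}]\det_{j,k}[M_j^{R_N}(x_k,t)]$, and is determinantal with the kernel $K_t^{R_N}$ stated in the claim. *)

theory Defs
  imports "HOL-Analysis.Analysis"
begin

text \<open>Jacobi theta functions (for Im tau > 0); the series index n \<ge> 1 of the paper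
  is shifted to k = n - 1 \<ge> 0.\<close>

definition theta1 :: "complex \<Rightarrow> complex \<Rightarrow> complex" where
  "theta1 v tau = 2 * (\<Sum>k. (-1) ^ k * exp (tau * of_real pi * \<i> * (of_nat k + 1/2)\<^sup>2)
                              * sin ((2 * of_nat k + 1) * of_real pi * v))"

definition theta2 :: "complex \<Rightarrow> complex \<Rightarrow> complex" where
  "theta2 v tau = 2 * (\<Sum>k. exp (tau * of_real pi * \<i> * (of_nat k + 1/2)\<^sup>2)
                              * cos ((2 * of_nat k + 1) * of_real pi * v))"

definition xi :: "real \<Rightarrow> real \<Rightarrow> real" where
  "xi r x = x / (2 * pi * r)"

definition tau :: "real \<Rightarrow> real \<Rightarrow> complex" where
  "tau r t = \<i> * of_real (t / (2 * pi * r\<^sup>2))"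

datatype root_type = A | B | Bv | C | Cv | BC | D

definition Jfun :: "root_type \<Rightarrow> nat \<Rightarrow> real" where
  "Jfun R j = (case R of
      A \<Rightarrow> real j - 1/2 | Cv \<Rightarrow> real j - 1/2
    | B \<Rightarrow> real j - 1 | Bv \<Rightarrow> real j - 1 | D \<Rightarrow> real j - 1
    | C \<Rightarrow> real j | BC \<Rightarrow> real j)"

definition calN :: "root_type \<Rightarrow> nat \<Rightarrow> real" where
  "calN R N = (case R of
      A \<Rightarrow> real N | B \<Rightarrow> 2 * real N - 1 | Bv \<Rightarrow> 2 * real N | Cv \<Rightarrow> 2 * real N
    | C \<Rightarrow> 2 * (real N + 1) | BC \<Rightarrow> 2 * real N + 1 | D \<Rightarrow> 2 * (real N - 1))"

definition Mfun :: "root_type \<Rightarrow> nat \<Rightarrow> real \<Rightarrow> nat \<Rightarrow> real \<Rightarrow> real \<Rightarrow> complex" where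
  "Mfun R N r j x t =
    (let J = of_real (Jfun R j); NN = of_real (calN R N); z = of_real (xi r x); tt = tau r t;
         ep = exp (2 * of_real pi * \<i> * J * z); em = exp (- 2 * of_real pi * \<i> * J * z)
     in case R of
       A \<Rightarrow> ep * theta2 (NN * (J * tt + z)) (NN\<^sup>2 * tt)
     | B \<Rightarrow> ep * theta1 (NN * (J * tt + z)) (NN\<^sup>2 * tt) - em * theta1 (NN * (J * tt - z)) (NN\<^sup>2 * tt)
     | Bv \<Rightarrow> ep * theta1 (NN * (J * tt + z)) (NN\<^sup>2 * tt) - em * theta1 (NN * (J * tt - z)) (NN\<^sup>2 * tt)
     | C \<Rightarrow> ep * theta2 (NN * (J * tt + z)) (NN\<^sup>2 * tt) - em * theta2 (NN * (J * tt - z)) (NN\<^sup>2 * tt)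
     | Cv \<Rightarrow> ep * theta2 (NN * (J * tt + z)) (NN\<^sup>2 * tt) - em * theta2 (NN * (J * tt - z)) (NN\<^sup>2 * tt)
     | BC \<Rightarrow> ep * theta2 (NN * (J * tt + z)) (NN\<^sup>2 * tt) - em * theta2 (NN * (J * tt - z)) (NN\<^sup>2 * tt)
     | D \<Rightarrow> ep * theta2 (NN * (J * tt + z)) (NN\<^sup>2 * tt) + em * theta2 (NN * (J * tt - z)) (NN\<^sup>2 * tt))"

definition mfun :: "root_type \<Rightarrow> nat \<Rightarrow> real \<Rightarrow> nat \<Rightarrow> real \<Rightarrow> complex" where
  "mfun R N r j ts =
    (let J = of_real (Jfun R j); NN = of_real (calN R N); tt = tau r ts in
     if (R = B \<or> R = Bv \<or> R = D) \<and> j = 1 then 4 * of_real (pi * r) * theta2 0 (NN\<^sup>2 * tt)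
     else if R = D \<and> j = N then 4 * of_real (pi * r) * theta2 (NN * (of_nat N - 1) * tt) (NN\<^sup>2 * tt)
     else 2 * of_real (pi * r) * theta2 (NN * J * tt) (NN\<^sup>2 * tt))"

definition kernel_t :: "root_type \<Rightarrow> nat \<Rightarrow> real \<Rightarrow> real \<Rightarrow> real \<Rightarrow> real \<Rightarrow> real \<Rightarrow> complex" where
  "kernel_t R N r t ts x y =
     (\<Sum>n = 1..N. (1 / mfun R N r n ts) * Mfun R N r n x t * cnj (Mfun R N r n y (ts - t)))"

definition state_space :: "root_type \<Rightarrow> real \<Rightarrow> real set" where
  "state_space R r = (if R = A then {0..<2 * pi * r} else {0..pi * r})"

text \<open>sin(a u)/sin u, extended continuously (L'Hopital) at the zeros of sin u.\<close>
definition sinratio :: "real \<Rightarrow> real \<Rightarrow> real" where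
  "sinratio a u = (if sin u = 0 then a * cos (a * u) / cos u else sin (a * u) / sin u)"

definition K_A :: "nat \<Rightarrow> real \<Rightarrow> real \<Rightarrow> real \<Rightarrow> real" where
  "K_A N r x y = 1 / (2 * pi * r) * sinratio (real N) ((x - y) / (2 * r))"

definition K_B :: "nat \<Rightarrow> real \<Rightarrow> real \<Rightarrow> real \<Rightarrow> real" where
  "K_B N r x y = 1 / (2 * pi * r) *
     (sinratio (2 * real N) ((x - y) / (2 * r)) - sinratio (2 * real N) ((x + y) / (2 * r)))"

definition K_C :: "nat \<Rightarrow> real \<Rightarrow> real \<Rightarrow> real \<Rightarrow> real" where
  "K_C N r x y = 1 / (2 * pi * r) *
     (sinratio (2 * real N + 1) ((x - y) / (2 * r)) - sinratio (2 * real N + 1) ((x + y) / (2 * r)))"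

definition K_D :: "nat \<Rightarrow> real \<Rightarrow> real \<Rightarrow> real \<Rightarrow> real" where
  "K_D N r x y = 1 / (2 * pi * r) *
     (sinratio (2 * real N - 1) ((x - y) / (2 * r)) + sinratio (2 * real N - 1) ((x + y) / (2 * r)))"

definition limit_kernel :: "root_type \<Rightarrow> nat \<Rightarrow> real \<Rightarrow> real \<Rightarrow> real \<Rightarrow> real" where
  "limit_kernel R = (case R of
      A \<Rightarrow> K_A | B \<Rightarrow> K_B | BC \<Rightarrow> K_B | Cv \<Rightarrow> K_B
    | C \<Rightarrow> K_C | Bv \<Rightarrow> K_C | D \<Rightarrow> K_D)"

end

theory Submission
  imports Defs
begin


lemma two_exp_cos: "2 * exp (U::complex) * cos (V::complex) = exp (U + \<i>*V) + exp (U - \<i>*V)"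
proof -
  have "exp (U - \<i>*V) = exp U * exp (-(\<i>*V))" by (simp add: exp_add[symmetric])
  then show ?thesis by (simp add: cos_exp_eq exp_add algebra_simps)
qed

lemma two_exp_sin: "2 * exp (U::complex) * sin (V::complex) = -\<i> * (exp (U + \<i>*V) - exp (U - \<i>*V))"
proof -
  have "exp (U - \<i>*V) = exp U * exp (-(\<i>*V))" by (simp add: exp_add[symmetric])
  moreover have "exp (U + \<i>*V) = exp U * exp (\<i>*V)" by (simp add: exp_add)
  moreover have "2 * exp U * sin V = \<i> * (exp U * exp (-(\<i>*V))) - \<i> * (exp U * exp (\<i>*V))"
    unfolding sin_exp_eq' by (simp add: field_simps)
  ultimately show ?thesis by (simp add: algebra_simps)
qed

lemma gen_cos: "exp X * exp Y * (2 * (exp Z * cos W)) = exp (X+Y+Z+\<i>*W) + exp (X+Y+Z-\<i>*W)"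
proof -
  have "exp X * exp Y * (2 * (exp Z * cos W)) = 2 * exp (X+Y+Z) * cos W"
    by (simp add: exp_add)
  then show ?thesis by (simp add: two_exp_cos)
qed

lemma gen_sin: "exp X * exp Y * (2 * ((-1)^k * exp Z * sin W)) = (-1)^k * (-\<i>) * (exp (X+Y+Z+\<i>*W) - exp (X+Y+Z-\<i>*W))"
proof -
  have "exp X * exp Y * (2 * ((-1)^k * exp Z * sin W)) = (-1)^k * (2 * exp (X+Y+Z) * sin W)"
    by (simp add: exp_add)
  then show ?thesis by (simp add: two_exp_sin)
qed

lemma th2_term:
  fixes NN J w s a :: real and k :: nat
  defines "m \<equiv> real k + 1/2"
  shows "exp (complex_of_real (pi * s * (a^2 - J^2))) * exp (2 * of_real pi * \<i> * of_real J * of_real w) *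
    (2 * (exp ((of_real NN)^2 * (\<i> * of_real s) * of_real pi * \<i> * (of_nat k + 1/2)\<^sup>2)
       * cos ((2 * of_nat k + 1) * of_real pi * (of_real NN * (of_real J * (\<i> * of_real s) + of_real w)))))
   = exp (complex_of_real (- pi * s * ((J + NN*m)^2 - a^2)) + 2 * of_real pi * \<i> * of_real (J + NN*m) * of_real w)
   + exp (complex_of_real (- pi * s * ((J - NN*m)^2 - a^2)) + 2 * of_real pi * \<i> * of_real (J - NN*m) * of_real w)"
  unfolding gen_cos
  apply (rule arg_cong2[where f="(+)"]; rule arg_cong[where f=exp])
  apply (simp_all add: algebra_simps power2_eq_square m_def)
  done

lemma th1_term:
  fixes NN J w s a :: real and k :: nat
  defines "m \<equiv> real k + 1/2"
  shows "exp (complex_of_real (pi * s * (a^2 - J^2))) * exp (2 * of_real pi * \<i> * of_real J * of_real w) *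
    (2 * ((-1)^k * exp ((of_real NN)^2 * (\<i> * of_real s) * of_real pi * \<i> * (of_nat k + 1/2)\<^sup>2)
       * sin ((2 * of_nat k + 1) * of_real pi * (of_real NN * (of_real J * (\<i> * of_real s) + of_real w)))))
   = (-1)^k * (-\<i>) * (exp (complex_of_real (- pi * s * ((J + NN*m)^2 - a^2)) + 2 * of_real pi * \<i> * of_real (J + NN*m) * of_real w)
   - exp (complex_of_real (- pi * s * ((J - NN*m)^2 - a^2)) + 2 * of_real pi * \<i> * of_real (J - NN*m) * of_real w))"
  unfolding gen_sin
  apply (rule arg_cong2[where f="(*)"], rule refl, rule arg_cong2[where f="(-)"]; rule arg_cong[where f=exp])
  apply (simp_all add: algebra_simps power2_eq_square m_def)
  done
lemma t1: fixes E :: real assumes "E > 0" shows "((\<lambda>s. exp (- pi * s * E)) \<longlongrightarrow> 0) at_top"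
proof -
  have "filterlim (\<lambda>s. (- pi * E) * s) at_bot at_top"
    by (rule filterlim_tendsto_neg_mult_at_bot[OF tendsto_const _ filterlim_ident]) (use assms in simp)
  then have "filterlim (\<lambda>s. - pi * s * E) at_bot at_top"
    by (simp add: algebra_simps)
  then show ?thesis using exp_at_bot filterlim_compose by blast
qed
lemma t3: fixes a b :: real shows "\<bar>a\<bar> < \<bar>b\<bar> \<Longrightarrow> a^2 < b^2"
  using power_strict_mono[of "\<bar>a\<bar>" "\<bar>b\<bar>" 2] by simp

definition gt :: "real \<Rightarrow> real \<Rightarrow> real \<Rightarrow> real \<Rightarrow> complex" where
  "gt a w b s = exp (complex_of_real (- pi * s * (b^2 - a^2)) + 2 * of_real pi * \<i> * of_real b * of_real w)"

lemma gt_norm: "norm (gt a w b s) = exp (- pi * s * (b^2 - a^2))"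
  unfolding gt_def norm_exp_eq_Re by simp

lemma gt_eq: "b^2 = a^2 \<Longrightarrow> gt a w b s = exp (2 * of_real pi * \<i> * of_real b * of_real w)"
  unfolding gt_def by simp

lemma gt_lim:
  assumes "a^2 \<le> b^2"
  shows "(gt a w b \<longlongrightarrow> (if b^2 = a^2 then exp (2 * of_real pi * \<i> * of_real b * of_real w) else 0)) at_top"
proof (cases "b^2 = a^2")
  case True
  then have "gt a w b = (\<lambda>s. exp (2 * of_real pi * \<i> * of_real b * of_real w))"
    by (simp add: gt_eq fun_eq_iff)
  then show ?thesis using True by simp
next
  case False
  then have "b^2 - a^2 > 0" using assms by simp
  from t1[OF this] have "((\<lambda>s. norm (gt a w b s)) \<longlongrightarrow> 0) at_top"
    by (simp add: gt_norm)
  then show ?thesis using False by (simp add: tendsto_norm_zero_iff)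
qed

lemma sq_ge_abs: fixes b :: real shows "\<bar>b\<bar> - 1 \<le> b^2"
proof -
  have "0 \<le> (\<bar>b\<bar> - 1/2)^2" by simp
  moreover have "b^2 = \<bar>b\<bar>^2" by simp
  ultimately show ?thesis by (simp add: power2_eq_square algebra_simps)
qed

lemma gt_bound:
  assumes "a^2 \<le> b^2" "s \<ge> 1" "real k - Cc \<le> \<bar>b\<bar>"
  shows "norm (gt a w b s) \<le> exp (Cc + 1 + a^2) * exp (-1) ^ k"
proof -
  have "1 * 1 \<le> pi * s"
    using assms pi_gt3 by (intro mult_mono) auto
  then have "pi * s * (b^2 - a^2) \<ge> (b^2 - a^2)"
    using mult_right_mono[of 1 "pi * s" "b^2 - a^2"] assms by simp
  moreover have "b^2 - a^2 \<ge> real k - (Cc + 1 + a^2)" using sq_ge_abs[of b] assms by linarith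
  moreover have "- pi * s * (b^2 - a^2) = - (pi * s * (b^2 - a^2))" by simp
  ultimately have "- pi * s * (b^2 - a^2) \<le> (Cc + 1 + a^2) + (- real k)" by linarith
  then have "exp (- pi * s * (b^2 - a^2)) \<le> exp ((Cc + 1 + a^2) + (- real k))" by simp
  also have "\<dots> = exp (Cc + 1 + a^2) * exp (- real k)"
    by (rule exp_add)
  also have "exp (- real k) = exp (-1) ^ k"
    using exp_of_nat_mult[of k "-1"] by simp
  finally show ?thesis by (simp add: gt_norm)
qed

lemma core:
  fixes bp bm :: "nat \<Rightarrow> real" and al be :: "nat \<Rightarrow> complex"
  assumes gep: "\<And>k. a^2 \<le> bp k ^2" and gem: "\<And>k. a^2 \<le> bm k ^2"
    and gtp: "\<forall>k\<ge>1. a^2 < bp k ^2" and gtm: "\<forall>k\<ge>1. a^2 < bm k ^2"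
    and grp: "\<And>k. real k - Cc \<le> \<bar>bp k\<bar>" and grm: "\<And>k. real k - Cc \<le> \<bar>bm k\<bar>"
    and nal: "\<And>k. norm (al k) \<le> 1" and nbe: "\<And>k. norm (be k) \<le> 1"
  shows "((\<lambda>s. \<Sum>k. al k * gt a w (bp k) s + be k * gt a w (bm k) s) \<longlongrightarrow>
      al 0 * (if bp 0 ^2 = a^2 then exp (2 * of_real pi * \<i> * of_real (bp 0) * of_real w) else 0)
    + be 0 * (if bm 0 ^2 = a^2 then exp (2 * of_real pi * \<i> * of_real (bm 0) * of_real w) else 0)) at_top"
    and "eventually (\<lambda>s. summable (\<lambda>k. al k * gt a w (bp k) s + be k * gt a w (bm k) s)) at_top"
proof -
  define f where "f k s = al k * gt a w (bp k) s + be k * gt a w (bm k) s" for k s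
  define l where "l k = al k * (if bp k ^2 = a^2 then exp (2 * of_real pi * \<i> * of_real (bp k) * of_real w) else 0)
    + be k * (if bm k ^2 = a^2 then exp (2 * of_real pi * \<i> * of_real (bm k) * of_real w) else 0)" for k
  define M where "M k = 2 * exp (Cc + 1 + a^2) * exp (-1) ^ k" for k
  have lim: "(f k \<longlongrightarrow> l k) at_top" for k
    unfolding f_def l_def
    by (intro tendsto_intros gt_lim gep gem)
  have bnd: "norm (f k s) \<le> M k" if "s \<ge> 1" for k s
  proof -
    have "norm (f k s) \<le> norm (al k) * norm (gt a w (bp k) s) + norm (be k) * norm (gt a w (bm k) s)"
      unfolding f_def by (metis norm_mult norm_triangle_ineq)
    also have "\<dots> \<le> 1 * (exp (Cc + 1 + a^2) * exp (-1) ^ k) + 1 * (exp (Cc + 1 + a^2) * exp (-1) ^ k)"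
      by (intro add_mono mult_mono nal nbe gt_bound gep gem grp grm that) auto
    finally show ?thesis by (simp add: M_def mult_ac)
  qed
  have ev: "eventually (\<lambda>(k,s). norm (f k s) \<le> M k) (at_top \<times>\<^sub>F at_top)"
    unfolding eventually_prod_filter
    by (intro exI[of _ "\<lambda>_. True"] exI[of _ "\<lambda>s. s \<ge> (1::real)"]) (auto simp: eventually_ge_at_top bnd)
  have sM: "summable M"
    unfolding M_def by (intro summable_mult summable_geometric) simp
  have nb: "(at_top::real filter) \<noteq> bot" by simp
  note T = tannerys_theorem[where a=f and b=l and M=M and F=at_top, OF lim ev sM nb]
  have "l n = 0" if "n \<notin> {0}" for n
  proof -
    have "1 \<le> n" using that by simp
    from gtp[rule_format, OF this] gtm[rule_format, OF this] show ?thesis by (simp add: l_def)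
  qed
  then have "suminf l = l 0"
    using suminf_finite[of "{0}" l] by simp
  then show "((\<lambda>s. \<Sum>k. al k * gt a w (bp k) s + be k * gt a w (bm k) s) \<longlongrightarrow>
      al 0 * (if bp 0 ^2 = a^2 then exp (2 * of_real pi * \<i> * of_real (bp 0) * of_real w) else 0)
    + be 0 * (if bm 0 ^2 = a^2 then exp (2 * of_real pi * \<i> * of_real (bm 0) * of_real w) else 0)) at_top"
    using T by (simp add: f_def l_def)
  show "eventually (\<lambda>s. summable (\<lambda>k. al k * gt a w (bp k) s + be k * gt a w (bm k) s)) at_top"
    using T by (auto simp: f_def elim!: eventually_mono intro: summable_norm_cancel)
qed


lemma series_rewrite:
  fixes c :: complex and h f :: "nat \<Rightarrow> complex"
  assumes "c \<noteq> 0" "\<And>k. c * (2 * h k) = f k" "summable f"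
  shows "c * (2 * suminf h) = suminf f"
proof -
  have hf: "h = (\<lambda>k. (1 / (2 * c)) * f k)"
    using assms(1) by (auto simp: fun_eq_iff assms(2)[symmetric])
  have sh: "summable h" unfolding hf by (intro summable_mult assms(3))
  have "c * (2 * suminf h) = c * suminf (\<lambda>k. 2 * h k)" using suminf_mult[OF sh, of 2] by simp
  also have "\<dots> = suminf (\<lambda>k. c * (2 * h k))" using suminf_mult[OF summable_mult[OF sh, of 2], of c] by simp
  finally show ?thesis using assms(2) by simp
qed

lemma G2:
  fixes NN J w a :: real
  assumes NN: "1 \<le> NN" and J0: "0 \<le> J" and JN: "J < NN" and a: "a = J - NN/2"
  shows "((\<lambda>s. exp (complex_of_real (pi * s * (a^2 - J^2))) * exp (2 * of_real pi * \<i> * of_real J * of_real w) *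
      theta2 (of_real NN * (of_real J * (\<i> * of_real s) + of_real w)) ((of_real NN)^2 * (\<i> * of_real s)))
     \<longlongrightarrow> exp (2 * of_real pi * \<i> * of_real a * of_real w)
         + (if J = 0 then exp (2 * of_real pi * \<i> * of_real (NN/2) * of_real w) else 0)) at_top"
proof -
  define bp where "bp k = J + NN * (real k + 1/2)" for k
  define bm where "bm k = J - NN * (real k + 1/2)" for k
  have absa: "\<bar>a\<bar> < 3/2*NN - J" using a NN J0 JN by (auto simp: abs_if)
  have lb: "NN * (real k + 1/2) - J \<le> \<bar>bp k\<bar>" "NN * (real k + 1/2) - J \<le> \<bar>bm k\<bar>" for k
    using J0 NN by (auto simp: bp_def bm_def abs_if)
  have mono: "NN * (3/2) \<le> NN * (real k + 1/2)" if "k \<ge> 1" for k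
    using that NN by (intro mult_left_mono) auto
  have gtp: "\<And>k. k \<ge> 1 \<Longrightarrow> a^2 < bp k ^2"
  proof -
    fix k :: nat assume k1: "k \<ge> 1"
    have "\<bar>a\<bar> < \<bar>bp k\<bar>" using lb[of k] mono[OF k1] absa by linarith
    then show "a^2 < bp k ^2" by (rule t3)
  qed
  have gtm: "\<And>k. k \<ge> 1 \<Longrightarrow> a^2 < bm k ^2"
  proof -
    fix k :: nat assume k1: "k \<ge> 1"
    have "\<bar>a\<bar> < \<bar>bm k\<bar>" using lb[of k] mono[OF k1] absa by linarith
    then show "a^2 < bm k ^2" by (rule t3)
  qed
  have k0: "bp 0 = J + NN/2" "bm 0 = a" by (simp_all add: bp_def bm_def a)
  have gep: "a^2 \<le> bp k ^2" for k
  proof (cases "k = 0")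
    case True
    have "\<bar>a\<bar> \<le> \<bar>bp 0\<bar>" using k0 a J0 NN by (auto simp: abs_if)
    then show ?thesis using True power_mono[of "\<bar>a\<bar>" "\<bar>bp 0\<bar>" 2] by simp
  next
    case False then have "k \<ge> 1" by simp
    from gtp[OF this] show ?thesis by simp
  qed
  have gem: "a^2 \<le> bm k ^2" for k
  proof (cases "k = 0")
    case False then have "k \<ge> 1" by simp
    from gtm[OF this] show ?thesis by simp
  qed (use k0 in simp)
  have grow: "real k - J \<le> \<bar>bp k\<bar>" "real k - J \<le> \<bar>bm k\<bar>" for k
  proof -
    have "real k + 1/2 \<le> NN * (real k + 1/2)" using NN by (simp add: mult_right_mono[of 1 NN])
    then show "real k - J \<le> \<bar>bp k\<bar>" "real k - J \<le> \<bar>bm k\<bar>" using lb[of k] by linarith+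
  qed
  have gtp': "\<forall>k\<ge>1. a^2 < bp k ^2" using gtp by blast
  have gtm': "\<forall>k\<ge>1. a^2 < bm k ^2" using gtm by blast
  have n1: "\<And>k::nat. norm (1::complex) \<le> 1" by simp
  note co = core[where a=a and bp=bp and bm=bm and Cc=J and al="\<lambda>_. 1" and be="\<lambda>_. 1" and w=w, OF gep gem gtp' gtm' grow(1) grow(2) n1 n1]
  have bp0: "(bp 0 ^2 = a^2) \<longleftrightarrow> J = 0"
  proof -
    have "bp 0 ^2 - a^2 = 2 * J * NN" unfolding k0 a by (simp add: power2_eq_square algebra_simps)
    then show ?thesis using NN J0 by auto
  qed
  have lim: "((\<lambda>s. \<Sum>k. gt a w (bp k) s + gt a w (bm k) s) \<longlongrightarrow>
      exp (2 * of_real pi * \<i> * of_real a * of_real w)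
         + (if J = 0 then exp (2 * of_real pi * \<i> * of_real (NN/2) * of_real w) else 0)) at_top"
  proof -
    note lim0 = co(1)[unfolded mult_1_left]
    have val: "(if bp 0 ^2 = a^2 then exp (2 * of_real pi * \<i> * of_real (bp 0) * of_real w) else 0)
      + (if bm 0 ^2 = a^2 then exp (2 * of_real pi * \<i> * of_real (bm 0) * of_real w) else 0)
      = exp (2 * of_real pi * \<i> * of_real a * of_real w)
         + (if J = 0 then exp (2 * of_real pi * \<i> * of_real (NN/2) * of_real w) else 0)"
      using bp0 unfolding k0 by (cases "J = 0") (simp_all add: a)
    show ?thesis using lim0 unfolding val .
  qed
  have ev: "eventually (\<lambda>s. (\<Sum>k. gt a w (bp k) s + gt a w (bm k) s) =
     exp (complex_of_real (pi * s * (a^2 - J^2))) * exp (2 * of_real pi * \<i> * of_real J * of_real w) *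
      theta2 (of_real NN * (of_real J * (\<i> * of_real s) + of_real w)) ((of_real NN)^2 * (\<i> * of_real s))) at_top"
    using co(2)
  proof (eventually_elim)
    case (elim s)
    show ?case unfolding theta2_def
    proof (rule series_rewrite[symmetric])
      show "summable (\<lambda>k. gt a w (bp k) s + gt a w (bm k) s)" using elim by simp
    next
      fix k
      show "exp (complex_of_real (pi * s * (a^2 - J^2))) * exp (2 * of_real pi * \<i> * of_real J * of_real w) *
        (2 * (exp ((of_real NN)^2 * (\<i> * of_real s) * of_real pi * \<i> * (of_nat k + 1/2)\<^sup>2)
       * cos ((2 * of_nat k + 1) * of_real pi * (of_real NN * (of_real J * (\<i> * of_real s) + of_real w)))))
        = gt a w (bp k) s + gt a w (bm k) s"
        unfolding gt_def bp_def bm_def by (rule th2_term)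
    qed simp
  qed
  show ?thesis using tendsto_cong[OF ev] lim by simp
qed
lemma G1:
  fixes NN J w a :: real
  assumes NN: "1 \<le> NN" and J0: "0 \<le> J" and JN: "J < NN" and a: "a = J - NN/2"
  shows "((\<lambda>s. exp (complex_of_real (pi * s * (a^2 - J^2))) * exp (2 * of_real pi * \<i> * of_real J * of_real w) *
      theta1 (of_real NN * (of_real J * (\<i> * of_real s) + of_real w)) ((of_real NN)^2 * (\<i> * of_real s)))
     \<longlongrightarrow> \<i> * exp (2 * of_real pi * \<i> * of_real a * of_real w)
         - \<i> * (if J = 0 then exp (2 * of_real pi * \<i> * of_real (NN/2) * of_real w) else 0)) at_top"
proof -
  define bp where "bp k = J + NN * (real k + 1/2)" for k
  define bm where "bm k = J - NN * (real k + 1/2)" for k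
  have absa: "\<bar>a\<bar> < 3/2*NN - J" using a NN J0 JN by (auto simp: abs_if)
  have lb: "NN * (real k + 1/2) - J \<le> \<bar>bp k\<bar>" "NN * (real k + 1/2) - J \<le> \<bar>bm k\<bar>" for k
    using J0 NN by (auto simp: bp_def bm_def abs_if)
  have mono: "NN * (3/2) \<le> NN * (real k + 1/2)" if "k \<ge> 1" for k
    using that NN by (intro mult_left_mono) auto
  have gtp: "\<And>k. k \<ge> 1 \<Longrightarrow> a^2 < bp k ^2"
  proof -
    fix k :: nat assume k1: "k \<ge> 1"
    have "\<bar>a\<bar> < \<bar>bp k\<bar>" using lb[of k] mono[OF k1] absa by linarith
    then show "a^2 < bp k ^2" by (rule t3)
  qed
  have gtm: "\<And>k. k \<ge> 1 \<Longrightarrow> a^2 < bm k ^2"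
  proof -
    fix k :: nat assume k1: "k \<ge> 1"
    have "\<bar>a\<bar> < \<bar>bm k\<bar>" using lb[of k] mono[OF k1] absa by linarith
    then show "a^2 < bm k ^2" by (rule t3)
  qed
  have k0: "bp 0 = J + NN/2" "bm 0 = a" by (simp_all add: bp_def bm_def a)
  have gep: "a^2 \<le> bp k ^2" for k
  proof (cases "k = 0")
    case True
    have "\<bar>a\<bar> \<le> \<bar>bp 0\<bar>" using k0 a J0 NN by (auto simp: abs_if)
    then show ?thesis using True power_mono[of "\<bar>a\<bar>" "\<bar>bp 0\<bar>" 2] by simp
  next
    case False then have "k \<ge> 1" by simp
    from gtp[OF this] show ?thesis by simp
  qed
  have gem: "a^2 \<le> bm k ^2" for k
  proof (cases "k = 0")
    case False then have "k \<ge> 1" by simp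
    from gtm[OF this] show ?thesis by simp
  qed (use k0 in simp)
  have grow: "real k - J \<le> \<bar>bp k\<bar>" "real k - J \<le> \<bar>bm k\<bar>" for k
  proof -
    have "real k + 1/2 \<le> NN * (real k + 1/2)" using NN by (simp add: mult_right_mono[of 1 NN])
    then show "real k - J \<le> \<bar>bp k\<bar>" "real k - J \<le> \<bar>bm k\<bar>" using lb[of k] by linarith+
  qed
  have gtp': "\<forall>k\<ge>1. a^2 < bp k ^2" using gtp by blast
  have gtm': "\<forall>k\<ge>1. a^2 < bm k ^2" using gtm by blast
  have n1: "\<And>k::nat. norm ((-1)^k * (-\<i>)) \<le> 1" by (simp add: norm_mult norm_power)
  have n2: "\<And>k::nat. norm ((-1)^k * \<i>) \<le> 1" by (simp add: norm_mult norm_power)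
  note co = core[where a=a and bp=bp and bm=bm and Cc=J and al="\<lambda>k. (-1)^k * (-\<i>)" and be="\<lambda>k. (-1)^k * \<i>" and w=w, OF gep gem gtp' gtm' grow(1) grow(2) n1 n2]
  have bp0: "(bp 0 ^2 = a^2) \<longleftrightarrow> J = 0"
  proof -
    have "bp 0 ^2 - a^2 = 2 * J * NN" unfolding k0 a by (simp add: power2_eq_square algebra_simps)
    then show ?thesis using NN J0 by auto
  qed
  have lim: "((\<lambda>s. \<Sum>k. (-1)^k * (-\<i>) * gt a w (bp k) s + (-1)^k * \<i> * gt a w (bm k) s) \<longlongrightarrow>
      \<i> * exp (2 * of_real pi * \<i> * of_real a * of_real w)
         - \<i> * (if J = 0 then exp (2 * of_real pi * \<i> * of_real (NN/2) * of_real w) else 0)) at_top"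
  proof -
    note lim0 = co(1)
    have val: "(-1)^0 * (-\<i>) * (if bp 0 ^2 = a^2 then exp (2 * of_real pi * \<i> * of_real (bp 0) * of_real w) else 0)
      + (-1)^0 * \<i> * (if bm 0 ^2 = a^2 then exp (2 * of_real pi * \<i> * of_real (bm 0) * of_real w) else 0)
      = \<i> * exp (2 * of_real pi * \<i> * of_real a * of_real w)
         - \<i> * (if J = 0 then exp (2 * of_real pi * \<i> * of_real (NN/2) * of_real w) else 0)"
      using bp0 unfolding k0 by (cases "J = 0") (simp_all add: a)
    show ?thesis using lim0 unfolding val .
  qed
  have ev: "eventually (\<lambda>s. (\<Sum>k. (-1)^k * (-\<i>) * gt a w (bp k) s + (-1)^k * \<i> * gt a w (bm k) s) =
     exp (complex_of_real (pi * s * (a^2 - J^2))) * exp (2 * of_real pi * \<i> * of_real J * of_real w) *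
      theta1 (of_real NN * (of_real J * (\<i> * of_real s) + of_real w)) ((of_real NN)^2 * (\<i> * of_real s))) at_top"
    using co(2)
  proof (eventually_elim)
    case (elim s)
    show ?case unfolding theta1_def
    proof (rule series_rewrite[symmetric])
      show "summable (\<lambda>k. (-1)^k * (-\<i>) * gt a w (bp k) s + (-1)^k * \<i> * gt a w (bm k) s)" using elim by simp
    next
      fix k
      show "exp (complex_of_real (pi * s * (a^2 - J^2))) * exp (2 * of_real pi * \<i> * of_real J * of_real w) *
        (2 * ((-1)^k * exp ((of_real NN)^2 * (\<i> * of_real s) * of_real pi * \<i> * (of_nat k + 1/2)\<^sup>2)
       * sin ((2 * of_nat k + 1) * of_real pi * (of_real NN * (of_real J * (\<i> * of_real s) + of_real w)))))
        = (-1)^k * (-\<i>) * gt a w (bp k) s + (-1)^k * \<i> * gt a w (bm k) s"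
        unfolding th1_term gt_def bp_def bm_def by (simp add: algebra_simps)
    qed simp
  qed
  show ?thesis using tendsto_cong[OF ev] lim by simp
qed


lemma sin0_nat: "sin (w::real) = 0 \<Longrightarrow> sin (real m * w) = 0 \<and> cos (real m * w) = cos w ^ m"
proof (induction m)
  case (Suc m)
  have "real (Suc m) * w = real m * w + w" by (simp add: algebra_simps)
  then show ?case using Suc by (simp add: sin_add cos_add)
qed simp

lemma cos_sq1: "sin (w::real) = 0 \<Longrightarrow> cos w ^ 2 = 1"
  using sin_cos_squared_add[of w] by simp

lemma pow_pm1: assumes "(c::real)^2 = 1" shows "c ^ m = (if even m then 1 else c)"
proof -
  have "c = 1 \<or> c = -1" using assms by (metis power2_eq_1_iff)
  then show ?thesis by auto
qed

lemma sin0_int: assumes "sin (w::real) = 0"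
  shows "sin (real_of_int k * w) = 0 \<and> cos (real_of_int k * w) = (if even k then 1 else cos w)"
proof (cases "k \<ge> 0")
  case True
  then obtain m where k: "k = int m" by (metis nonneg_eq_int)
  show ?thesis using sin0_nat[OF assms, of m] pow_pm1[OF cos_sq1[OF assms], of m] k by simp
next
  case False
  then obtain m where k: "k = - int m" by (metis le_cases neg_0_le_iff_le nonneg_eq_int minus_minus)
  have "real_of_int k * w = - (real m * w)" using k by simp
  then show ?thesis using sin0_nat[OF assms, of m] pow_pm1[OF cos_sq1[OF assms], of m] k by simp
qed

lemma tele_cos:
  "2 * sin (w::real) * (\<Sum>l<N. cos ((2 * real l + c) * w)) = sin ((2 * real N + c - 1) * w) - sin ((c - 1) * w)"
proof -
  have "2 * sin w * cos ((2 * real l + c) * w) =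
        sin ((2 * real (Suc l) + c - 1) * w) - sin ((2 * real l + c - 1) * w)" for l
  proof -
    have e1: "(2 * real (Suc l) + c - 1) * w = (2 * real l + c) * w + w" by (simp add: algebra_simps)
    have e2: "(2 * real l + c - 1) * w = (2 * real l + c) * w - w" by (simp add: algebra_simps)
    show ?thesis unfolding e1 e2 sin_add sin_diff by (simp add: algebra_simps)
  qed
  then have "2 * sin w * (\<Sum>l<N. cos ((2 * real l + c) * w)) =
     (\<Sum>l<N. sin ((2 * real (Suc l) + c - 1) * w) - sin ((2 * real l + c - 1) * w))"
    by (simp add: sum_distrib_left)
  also have "\<dots> = sin ((2 * real N + c - 1) * w) - sin ((2 * real 0 + c - 1) * w)"
    by (rule sum_lessThan_telescope[where f = "\<lambda>l. sin ((2 * real l + c - 1) * w)"])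
  finally show ?thesis by simp
qed

lemma tele_sin:
  "2 * sin (w::real) * (\<Sum>l<N. sin ((2 * real l + c) * w)) = cos ((c - 1) * w) - cos ((2 * real N + c - 1) * w)"
proof -
  have "2 * sin w * sin ((2 * real l + c) * w) =
        cos ((2 * real l + c - 1) * w) - cos ((2 * real (Suc l) + c - 1) * w)" for l
  proof -
    have e1: "(2 * real (Suc l) + c - 1) * w = (2 * real l + c) * w + w" by (simp add: algebra_simps)
    have e2: "(2 * real l + c - 1) * w = (2 * real l + c) * w - w" by (simp add: algebra_simps)
    show ?thesis unfolding e1 e2 cos_add cos_diff by (simp add: algebra_simps)
  qed
  then have "2 * sin w * (\<Sum>l<N. sin ((2 * real l + c) * w)) =
     (\<Sum>l<N. cos ((2 * real l + c - 1) * w) - cos ((2 * real (Suc l) + c - 1) * w))"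
    by (simp add: sum_distrib_left)
  also have "\<dots> = cos ((2 * real 0 + c - 1) * w) - cos ((2 * real N + c - 1) * w)"
    by (rule sum_lessThan_telescope'[where f = "\<lambda>l. cos ((2 * real l + c - 1) * w)"])
  finally show ?thesis by simp
qed


lemma sum_sin0:
  assumes "sin (w::real) = 0"
  shows "(\<Sum>l<N. cos ((2 * real l + real_of_int c) * w)) = real N * (if even c then 1 else cos w)"
    and "(\<Sum>l<N. sin ((2 * real l + real_of_int c) * w)) = 0"
proof -
  have e: "2 * real l + real_of_int c = real_of_int (2 * int l + c)" for l by simp
  have p: "even (2 * int l + c) = even c" for l by simp
  have t: "cos ((2 * real l + real_of_int c) * w) = (if even c then 1 else cos w)" for l
    using sin0_int[OF assms, of "2 * int l + c"] unfolding e[symmetric] p by auto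
  show "(\<Sum>l<N. cos ((2 * real l + real_of_int c) * w)) = real N * (if even c then 1 else cos w)"
    unfolding t by simp
  have t2: "sin ((2 * real l + real_of_int c) * w) = 0" for l
    using sin0_int[OF assms, of "2 * int l + c"] unfolding e[symmetric] by auto
  show "(\<Sum>l<N. sin ((2 * real l + real_of_int c) * w)) = 0"
    unfolding t2 by simp
qed

lemma sr0:
  assumes "sin (w::real) = 0"
  shows "sinratio (real_of_int k) w = real_of_int k * (if even k then cos w else 1)"
proof -
  have c2: "cos w * cos w = 1" using cos_sq1[OF assms] by (simp add: power2_eq_square)
  then have "cos w \<noteq> 0" by auto
  then show ?thesis using sin0_int[OF assms, of k] assms c2
    by (auto simp: sinratio_def field_simps)
qed

lemma SB: "(\<Sum>l<N. cos ((2 * real l + (1 - 2 * real N)) * w)) = sinratio (2 * real N) w / 2"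
proof (cases "sin w = 0")
  case True
  have e1: "1 - 2 * real N = real_of_int (1 - 2 * int N)" by simp
  have e2: "2 * real N = real_of_int (2 * int N)" by simp
  have "odd (1 - 2 * int N)" by simp
  then show ?thesis unfolding e1 sum_sin0(1)[OF True] unfolding e2 sr0[OF True] by simp
next
  case False
  have "2 * sin w * (\<Sum>l<N. cos ((2 * real l + (1 - 2 * real N)) * w)) = sin (2 * real N * w)"
    using tele_cos[where w=w and N=N and c="1 - 2 * real N"] by simp
  then show ?thesis using False by (simp add: sinratio_def field_simps)
qed

lemma SC: "(\<Sum>l<N. cos ((2 * real l + (- 2 * real N)) * w)) = (sinratio (2 * real N + 1) w - 1) / 2"
proof (cases "sin w = 0")
  case True
  have e1: "- 2 * real N = real_of_int (- 2 * int N)" by simp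
  have e2: "2 * real N + 1 = real_of_int (2 * int N + 1)" by simp
  show ?thesis unfolding e1 e2 sum_sin0(1)[OF True] sr0[OF True] by simp
next
  case False
  have h: "2 * sin w * (\<Sum>l<N. cos ((2 * real l + (- 2 * real N)) * w)) = sin ((2 * real N + - 2 * real N - 1) * w) - sin ((- 2 * real N - 1) * w)"
    by (rule tele_cos)
  have a1: "(2 * real N + - 2 * real N - 1) * w = - w" by simp
  have a2: "(- 2 * real N - 1) * w = - ((2 * real N + 1) * w)" by (simp add: algebra_simps)
  have "2 * sin w * (\<Sum>l<N. cos ((2 * real l + (- 2 * real N)) * w)) = sin ((2 * real N + 1) * w) - sin w"
    using h unfolding a1 a2 sin_minus by simp
  then show ?thesis using False by (simp add: sinratio_def field_simps)
qed

lemma SD: "(\<Sum>l<N. cos ((2 * real l + (2 - 2 * real N)) * w)) = (sinratio (2 * real N - 1) w + 1) / 2"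
proof (cases "sin w = 0")
  case True
  have e1: "2 - 2 * real N = real_of_int (2 - 2 * int N)" by simp
  have e2: "2 * real N - 1 = real_of_int (2 * int N - 1)" by simp
  have "odd (2 * int N - 1)" by simp
  then show ?thesis unfolding e1 e2 sum_sin0(1)[OF True] sr0[OF True] by simp
next
  case False
  have h: "2 * sin w * (\<Sum>l<N. cos ((2 * real l + (2 - 2 * real N)) * w)) = sin ((2 * real N + (2 - 2 * real N) - 1) * w) - sin ((2 - 2 * real N - 1) * w)"
    by (rule tele_cos)
  have a1: "(2 * real N + (2 - 2 * real N) - 1) * w = w" by simp
  have a2: "(2 - 2 * real N - 1) * w = - ((2 * real N - 1) * w)" by (simp add: algebra_simps)
  have "2 * sin w * (\<Sum>l<N. cos ((2 * real l + (2 - 2 * real N)) * w)) = sin w + sin ((2 * real N - 1) * w)"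
    using h unfolding a1 a2 sin_minus by simp
  then show ?thesis using False by (simp add: sinratio_def field_simps)
qed

lemma SAc: "(\<Sum>l<N. cos ((2 * real l + (1 - real N)) * w)) = sinratio (real N) w"
proof (cases "sin w = 0")
  case True
  have e1: "1 - real N = real_of_int (1 - int N)" by simp
  have e2: "real N = real_of_int (int N)" by simp
  have "even (1 - int N) \<longleftrightarrow> odd (int N)" by presburger
  then show ?thesis unfolding e1 sum_sin0(1)[OF True] by (subst e2, subst sr0[OF True]) simp
next
  case False
  have "2 * sin w * (\<Sum>l<N. cos ((2 * real l + (1 - real N)) * w)) = 2 * sin (real N * w)"
    using tele_cos[where w=w and N=N and c="1 - real N"] by (simp add: algebra_simps)
  then show ?thesis using False by (simp add: sinratio_def field_simps)
qed

lemma SAs: "(\<Sum>l<N. sin ((2 * real l + (1 - real N)) * w)) = 0"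
proof (cases "sin w = 0")
  case True
  have e1: "1 - real N = real_of_int (1 - int N)" by simp
  show ?thesis unfolding e1 sum_sin0(2)[OF True] ..
next
  case False
  have "2 * sin w * (\<Sum>l<N. sin ((2 * real l + (1 - real N)) * w)) = 0"
    using tele_sin[where w=w and N=N and c="1 - real N"] by (simp add: algebra_simps)
  then show ?thesis using False by simp
qed



lemma sinsin:
  assumes "r \<noteq> 0"
  shows "4 * sin (a * x / r) * sin (a * y / r) / (2 * pi * r)
       = (cos ((2 * a) * ((x - y) / (2 * r))) - cos ((2 * a) * ((x + y) / (2 * r)))) / (pi * r)"
proof -
  have e1: "(2 * a) * ((x - y) / (2 * r)) = a * x / r - a * y / r" using assms by (simp add: field_simps)
  have e2: "(2 * a) * ((x + y) / (2 * r)) = a * x / r + a * y / r" using assms by (simp add: field_simps)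
  show ?thesis unfolding e1 e2 cos_diff cos_add by (simp add: field_simps)
qed

lemma coscos:
  assumes "r \<noteq> 0"
  shows "4 * cos (a * x / r) * cos (a * y / r) / (2 * pi * r)
       = (cos ((2 * a) * ((x - y) / (2 * r))) + cos ((2 * a) * ((x + y) / (2 * r)))) / (pi * r)"
proof -
  have e1: "(2 * a) * ((x - y) / (2 * r)) = a * x / r - a * y / r" using assms by (simp add: field_simps)
  have e2: "(2 * a) * ((x + y) / (2 * r)) = a * x / r + a * y / r" using assms by (simp add: field_simps)
  show ?thesis unfolding e1 e2 cos_diff cos_add by (simp add: field_simps)
qed

lemma sum_B:
  assumes "r \<noteq> 0"
  shows "(\<Sum>j=1..N. 4 * sin ((real j - real N - 1/2) * x / r) * sin ((real j - real N - 1/2) * y / r) / (2 * pi * r))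
     = K_B N r x y"
proof -
  have "(\<Sum>j=1..N. 4 * sin ((real j - real N - 1/2) * x / r) * sin ((real j - real N - 1/2) * y / r) / (2 * pi * r))
     = (\<Sum>l<N. (cos ((2 * real l + (1 - 2 * real N)) * ((x - y) / (2 * r))) - cos ((2 * real l + (1 - 2 * real N)) * ((x + y) / (2 * r)))) / (pi * r))"
    unfolding One_nat_def sum.atLeast1_atMost_eq sinsin[OF assms]
    by (intro sum.cong refl) (simp add: algebra_simps)
  also have "\<dots> = ((\<Sum>l<N. cos ((2 * real l + (1 - 2 * real N)) * ((x - y) / (2 * r)))) - (\<Sum>l<N. cos ((2 * real l + (1 - 2 * real N)) * ((x + y) / (2 * r))))) / (pi * r)"
    by (simp only: sum_subtractf[symmetric] sum_divide_distrib)
  also have "\<dots> = K_B N r x y"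
    unfolding SB K_B_def using assms by (simp add: field_simps)
  finally show ?thesis .
qed

lemma sum_C:
  assumes "r \<noteq> 0"
  shows "(\<Sum>j=1..N. 4 * sin ((real j - real N - 1) * x / r) * sin ((real j - real N - 1) * y / r) / (2 * pi * r))
     = K_C N r x y"
proof -
  have "(\<Sum>j=1..N. 4 * sin ((real j - real N - 1) * x / r) * sin ((real j - real N - 1) * y / r) / (2 * pi * r))
     = (\<Sum>l<N. (cos ((2 * real l + (- 2 * real N)) * ((x - y) / (2 * r))) - cos ((2 * real l + (- 2 * real N)) * ((x + y) / (2 * r)))) / (pi * r))"
    unfolding One_nat_def sum.atLeast1_atMost_eq sinsin[OF assms]
    by (intro sum.cong refl) (simp add: algebra_simps)
  also have "\<dots> = ((\<Sum>l<N. cos ((2 * real l + (- 2 * real N)) * ((x - y) / (2 * r)))) - (\<Sum>l<N. cos ((2 * real l + (- 2 * real N)) * ((x + y) / (2 * r))))) / (pi * r)"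
    by (simp only: sum_subtractf[symmetric] sum_divide_distrib)
  also have "\<dots> = K_C N r x y"
    unfolding SC K_C_def using assms by (simp add: field_simps)
  finally show ?thesis .
qed

lemma sum_D0:
  assumes "r \<noteq> 0"
  shows "(\<Sum>j=1..N. 4 * cos ((real j - real N) * x / r) * cos ((real j - real N) * y / r) / (2 * pi * r))
     = K_D N r x y + 1 / (pi * r)"
proof -
  have "(\<Sum>j=1..N. 4 * cos ((real j - real N) * x / r) * cos ((real j - real N) * y / r) / (2 * pi * r))
     = (\<Sum>l<N. (cos ((2 * real l + (2 - 2 * real N)) * ((x - y) / (2 * r))) + cos ((2 * real l + (2 - 2 * real N)) * ((x + y) / (2 * r)))) / (pi * r))"
    unfolding One_nat_def sum.atLeast1_atMost_eq coscos[OF assms]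
    by (intro sum.cong refl) (simp add: algebra_simps)
  also have "\<dots> = ((\<Sum>l<N. cos ((2 * real l + (2 - 2 * real N)) * ((x - y) / (2 * r)))) + (\<Sum>l<N. cos ((2 * real l + (2 - 2 * real N)) * ((x + y) / (2 * r))))) / (pi * r)"
    by (simp only: sum.distrib[symmetric] sum_divide_distrib)
  also have "\<dots> = K_D N r x y + 1 / (pi * r)"
    unfolding SD K_D_def using assms by (simp add: field_simps)
  finally show ?thesis .
qed

lemma sum_A:
  "(\<Sum>j=1..N. cis ((2 * real j - 1 - real N) * u)) = complex_of_real (sinratio (real N) u)"
proof -
  have "(\<Sum>j=1..N. cis ((2 * real j - 1 - real N) * u)) = (\<Sum>l<N. cis ((2 * real l + (1 - real N)) * u))"
    unfolding One_nat_def sum.atLeast1_atMost_eq by (intro sum.cong refl) (simp add: algebra_simps)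
  also have "\<dots> = complex_of_real (sinratio (real N) u)"
    using SAc[of N u] SAs[of N u] by (simp add: complex_eq_iff Re_sum Im_sum)
  finally show ?thesis .
qed



definition Pf :: "real \<Rightarrow> real \<Rightarrow> real \<Rightarrow> real \<Rightarrow> complex" where
  "Pf NN J w s = exp (2 * of_real pi * \<i> * of_real J * of_real w) *
      theta2 (of_real NN * (of_real J * (\<i> * of_real s) + of_real w)) ((of_real NN)^2 * (\<i> * of_real s))"

definition Qf :: "real \<Rightarrow> real \<Rightarrow> real \<Rightarrow> real \<Rightarrow> complex" where
  "Qf NN J w s = exp (2 * of_real pi * \<i> * of_real J * of_real w) *
      theta1 (of_real NN * (of_real J * (\<i> * of_real s) + of_real w)) ((of_real NN)^2 * (\<i> * of_real s))"

definition Ee :: "real \<Rightarrow> real \<Rightarrow> complex" where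
  "Ee b w = exp (2 * of_real pi * \<i> * of_real b * of_real w)"

lemma Ee_cis: "Ee b w = cis (2 * pi * b * w)"
  unfolding Ee_def cis_conv_exp by (simp add: mult_ac)

lemma LP:
  assumes "1 \<le> NN" "0 \<le> J" "J < NN" "a = J - NN/2" "filterlim g at_top F"
  shows "((\<lambda>t. complex_of_real (exp (pi * g t * (a^2 - J^2))) * Pf NN J w (g t))
     \<longlongrightarrow> Ee a w + (if J = 0 then Ee (NN/2) w else 0)) F"
proof -
  note G = filterlim_compose[OF G2[OF assms(1-4), of w] assms(5)]
  show ?thesis using G unfolding Pf_def Ee_def exp_of_real[symmetric] mult.assoc .
qed

lemma LQ:
  assumes "1 \<le> NN" "0 \<le> J" "J < NN" "a = J - NN/2" "filterlim g at_top F"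
  shows "((\<lambda>t. complex_of_real (exp (pi * g t * (a^2 - J^2))) * Qf NN J w (g t))
     \<longlongrightarrow> \<i> * Ee a w - \<i> * (if J = 0 then Ee (NN/2) w else 0)) F"
proof -
  note G = filterlim_compose[OF G1[OF assms(1-4), of w] assms(5)]
  show ?thesis using G unfolding Qf_def Ee_def exp_of_real[symmetric] mult.assoc .
qed

lemma term_lim:
  fixes X Y Z :: "real \<Rightarrow> complex" and e :: "real \<Rightarrow> real"
  assumes "\<And>t. e t \<noteq> 0"
    and "((\<lambda>t. of_real (e t) * X t) \<longlongrightarrow> Lx) F"
    and "((\<lambda>t. of_real (e t) * Y t) \<longlongrightarrow> Ly) F"
    and "((\<lambda>t. of_real (e t ^ 2) * Z t) \<longlongrightarrow> Lz) F"
    and "Lz \<noteq> 0"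
  shows "((\<lambda>t. (1 / Z t) * X t * cnj (Y t)) \<longlongrightarrow> Lx * cnj Ly / Lz) F"
proof -
  have eq: "(1 / Z t) * X t * cnj (Y t) = (of_real (e t) * X t) * cnj (of_real (e t) * Y t) / (of_real (e t ^ 2) * Z t)" for t
  proof (cases "Z t = 0")
    case False
    then show ?thesis using assms(1)[of t] by (simp add: field_simps power2_eq_square)
  qed simp
  show ?thesis unfolding eq by (intro tendsto_intros assms)
qed

lemma lim_sig:
  assumes "r > 0" "c > 0"
  shows "filterlim (\<lambda>ts::real. ts / c / (2 * pi * r^2)) at_top at_top"
proof -
  have "filterlim (\<lambda>ts::real. (1 / (c * (2 * pi * r^2))) * ts) at_top at_top"
    by (rule filterlim_tendsto_pos_mult_at_top[OF tendsto_const _ filterlim_ident]) (use assms in simp)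
  moreover have "(\<lambda>ts::real. (1 / (c * (2 * pi * r^2))) * ts) = (\<lambda>ts. ts / c / (2 * pi * r^2))"
    by (simp add: fun_eq_iff field_simps)
  ultimately show ?thesis by simp
qed



lemma lim_sig1:
  assumes "r > 0"
  shows "filterlim (\<lambda>ts::real. ts / (2 * pi * r^2)) at_top at_top"
  using lim_sig[OF assms, of 1] by simp

lemma Mfun_A: "Mfun A N r j x t = Pf (calN A N) (Jfun A j) (xi r x) (t / (2 * pi * r^2))"
  unfolding Mfun_def Pf_def tau_def Let_def by simp

lemma Mfun_BB: "R = B \<or> R = Bv \<Longrightarrow> Mfun R N r j x t =
   Qf (calN R N) (Jfun R j) (xi r x) (t / (2 * pi * r^2)) - Qf (calN R N) (Jfun R j) (- xi r x) (t / (2 * pi * r^2))"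
  unfolding Mfun_def Qf_def tau_def Let_def by (auto simp: algebra_simps)

lemma Mfun_CC: "R = C \<or> R = Cv \<or> R = BC \<Longrightarrow> Mfun R N r j x t =
   Pf (calN R N) (Jfun R j) (xi r x) (t / (2 * pi * r^2)) - Pf (calN R N) (Jfun R j) (- xi r x) (t / (2 * pi * r^2))"
  unfolding Mfun_def Pf_def tau_def Let_def by (auto simp: algebra_simps)

lemma Mfun_D: "Mfun D N r j x t =
   Pf (calN D N) (Jfun D j) (xi r x) (t / (2 * pi * r^2)) + Pf (calN D N) (Jfun D j) (- xi r x) (t / (2 * pi * r^2))"
  unfolding Mfun_def Pf_def tau_def Let_def by (auto simp: algebra_simps)

lemma mfun_gen:
  assumes h1: "\<not> ((R = B \<or> R = Bv \<or> R = D) \<and> j = 1)" and h2: "\<not> (R = D \<and> j = N)"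
  shows "mfun R N r j ts = 2 * of_real (pi * r) * Pf (calN R N) (Jfun R j) 0 (ts / (2 * pi * r^2))"
  unfolding mfun_def Let_def if_not_P[OF h1] if_not_P[OF h2] Pf_def tau_def by (simp add: algebra_simps)

lemma mfun_1: "R = B \<or> R = Bv \<or> R = D \<Longrightarrow>
  mfun R N r 1 ts = 4 * of_real (pi * r) * Pf (calN R N) 0 0 (ts / (2 * pi * r^2))"
  unfolding mfun_def Pf_def tau_def Let_def by (auto simp: algebra_simps)

lemma mfun_DN: "N \<noteq> 1 \<Longrightarrow>
  mfun D N r N ts = 4 * of_real (pi * r) * Pf (calN D N) (real N - 1) 0 (ts / (2 * pi * r^2))"
  unfolding mfun_def Pf_def tau_def Let_def by (auto simp: algebra_simps)



lemma Ee_xi: "r \<noteq> 0 \<Longrightarrow> Ee b (xi r x) = cis (b * x / r)"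
  unfolding Ee_cis xi_def by simp
lemma Ee_mxi: "r \<noteq> 0 \<Longrightarrow> Ee b (- xi r x) = cis (- (b * x / r))"
  unfolding Ee_cis xi_def by simp

lemma esq: "exp (pi * (ts / 2 / (2 * pi * r^2)) * c) ^ 2 = exp (pi * (ts / (2 * pi * r^2)) * c)"
proof -
  have "exp (pi * (ts / 2 / (2 * pi * r^2)) * c) ^ 2 = exp (2 * (pi * (ts / 2 / (2 * pi * r^2)) * c))"
    by (simp only: power2_eq_square exp_add[symmetric] mult_2)
  also have "2 * (pi * (ts / 2 / (2 * pi * r^2)) * c) = pi * (ts / (2 * pi * r^2)) * c" by simp
  finally show ?thesis .
qed
locale setting =
  fixes r NN J a :: real
  assumes r: "r > 0" and NN: "1 \<le> NN" and J0: "0 \<le> J" and JN: "J < NN" and a: "a = J - NN/2"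
begin

definition e :: "real \<Rightarrow> real" where "e ts = exp (pi * (ts / 2 / (2 * pi * r^2)) * (a^2 - J^2))"

lemma e_nz: "e ts \<noteq> 0" by (simp add: e_def)

lemma limP: "((\<lambda>ts. of_real (e ts) * Pf NN J w (ts / 2 / (2 * pi * r^2)))
     \<longlongrightarrow> Ee a w + (if J = 0 then Ee (NN/2) w else 0)) at_top"
  unfolding e_def by (rule LP[OF NN J0 JN a lim_sig[OF r, of 2]]) simp

lemma limQ: "((\<lambda>ts. of_real (e ts) * Qf NN J w (ts / 2 / (2 * pi * r^2)))
     \<longlongrightarrow> \<i> * Ee a w - \<i> * (if J = 0 then Ee (NN/2) w else 0)) at_top"
  unfolding e_def by (rule LQ[OF NN J0 JN a lim_sig[OF r, of 2]]) simp

lemma limZ: "((\<lambda>ts. of_real (e ts ^ 2) * (of_real kz * Pf NN J 0 (ts / (2 * pi * r^2))))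
     \<longlongrightarrow> of_real kz * (1 + (if J = 0 then 1 else 0))) at_top"
proof -
  have L: "((\<lambda>ts. of_real kz * (of_real (exp (pi * (ts / (2 * pi * r^2)) * (a^2 - J^2))) * Pf NN J 0 (ts / (2 * pi * r^2))))
     \<longlongrightarrow> of_real kz * (Ee a 0 + (if J = 0 then Ee (NN/2) 0 else 0))) at_top"
    by (intro tendsto_intros LP[OF NN J0 JN a lim_sig1[OF r]])
  have eq: "(\<lambda>ts. of_real (e ts ^ 2) * (of_real kz * Pf NN J 0 (ts / (2 * pi * r^2)))) =
     (\<lambda>ts. of_real kz * (of_real (exp (pi * (ts / (2 * pi * r^2)) * (a^2 - J^2))) * Pf NN J 0 (ts / (2 * pi * r^2))))"
    unfolding e_def esq by (simp add: fun_eq_iff mult_ac)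
  have E0: "Ee b 0 = 1" for b by (simp add: Ee_def)
  show ?thesis using L unfolding eq[symmetric] E0 .
qed


lemma cis_pm: "cis p - cis (- p) = 2 * \<i> * complex_of_real (sin p)"
  by (simp add: complex_eq_iff)
lemma cis_pp: "cis p + cis (- p) = 2 * complex_of_real (cos p)"
  by (simp add: complex_eq_iff)

lemma shape_A:
  assumes Jnz: "J \<noteq> 0" and kz: "kz \<noteq> 0"
    and hX: "\<And>ts. X ts = Pf NN J (xi r x) (ts / 2 / (2 * pi * r^2))"
    and hY: "\<And>ts. Y ts = Pf NN J (xi r y) (ts / 2 / (2 * pi * r^2))"
    and hZ: "\<And>ts. Z ts = of_real kz * Pf NN J 0 (ts / (2 * pi * r^2))"
  shows "((\<lambda>ts. (1 / Z ts) * X ts * cnj (Y ts)) \<longlongrightarrow> cis (a * x / r - a * y / r) / of_real kz) at_top"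
proof -
  have lx: "((\<lambda>ts. of_real (e ts) * X ts) \<longlongrightarrow> Ee a (xi r x)) at_top"
    using limP[of "xi r x"] Jnz by (simp add: hX)
  have ly: "((\<lambda>ts. of_real (e ts) * Y ts) \<longlongrightarrow> Ee a (xi r y)) at_top"
    using limP[of "xi r y"] Jnz by (simp add: hY)
  have lz: "((\<lambda>ts. of_real (e ts ^ 2) * Z ts) \<longlongrightarrow> of_real kz) at_top"
    using limZ[of kz] Jnz by (simp add: hZ)
  have lim: "((\<lambda>ts. (1 / Z ts) * X ts * cnj (Y ts)) \<longlongrightarrow> Ee a (xi r x) * cnj (Ee a (xi r y)) / of_real kz) at_top"
    by (rule term_lim[OF e_nz lx ly lz]) (use kz in simp)
  have val: "Ee a (xi r x) * cnj (Ee a (xi r y)) = cis (a * x / r - a * y / r)"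
    using r by (simp add: Ee_xi cis_cnj cis_mult)
  show ?thesis using lim unfolding val .
qed

lemma shape_C:
  assumes Jnz: "J \<noteq> 0" and kz: "kz \<noteq> 0"
    and hX: "\<And>ts. X ts = Pf NN J (xi r x) (ts / 2 / (2 * pi * r^2)) - Pf NN J (- xi r x) (ts / 2 / (2 * pi * r^2))"
    and hY: "\<And>ts. Y ts = Pf NN J (xi r y) (ts / 2 / (2 * pi * r^2)) - Pf NN J (- xi r y) (ts / 2 / (2 * pi * r^2))"
    and hZ: "\<And>ts. Z ts = of_real kz * Pf NN J 0 (ts / (2 * pi * r^2))"
  shows "((\<lambda>ts. (1 / Z ts) * X ts * cnj (Y ts)) \<longlongrightarrow>
     complex_of_real (4 * sin (a * x / r) * sin (a * y / r) / kz)) at_top"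
proof -
  have lx: "((\<lambda>ts. of_real (e ts) * X ts) \<longlongrightarrow> Ee a (xi r x) - Ee a (- xi r x)) at_top"
    using tendsto_diff[OF limP[of "xi r x"] limP[of "- xi r x"]] Jnz by (simp add: hX algebra_simps)
  have ly: "((\<lambda>ts. of_real (e ts) * Y ts) \<longlongrightarrow> Ee a (xi r y) - Ee a (- xi r y)) at_top"
    using tendsto_diff[OF limP[of "xi r y"] limP[of "- xi r y"]] Jnz by (simp add: hY algebra_simps)
  have lz: "((\<lambda>ts. of_real (e ts ^ 2) * Z ts) \<longlongrightarrow> of_real kz) at_top"
    using limZ[of kz] Jnz by (simp add: hZ)
  have lim: "((\<lambda>ts. (1 / Z ts) * X ts * cnj (Y ts)) \<longlongrightarrow>
     (Ee a (xi r x) - Ee a (- xi r x)) * cnj (Ee a (xi r y) - Ee a (- xi r y)) / of_real kz) at_top"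
    by (rule term_lim[OF e_nz lx ly lz]) (use kz in simp)
  have val: "(Ee a (xi r x) - Ee a (- xi r x)) * cnj (Ee a (xi r y) - Ee a (- xi r y)) / of_real kz
      = complex_of_real (4 * sin (a * x / r) * sin (a * y / r) / kz)"
    using r unfolding Ee_xi[OF less_imp_neq[OF r, symmetric]] Ee_mxi[OF less_imp_neq[OF r, symmetric]] cis_pm
    by (simp add: algebra_simps)
  show ?thesis using lim unfolding val .
qed

lemma Q_val:
  "(\<i> * Ee a (xi r x) - \<i> * (if J = 0 then Ee (NN/2) (xi r x) else 0))
   - (\<i> * Ee a (- xi r x) - \<i> * (if J = 0 then Ee (NN/2) (- xi r x) else 0))
   = - 2 * (1 + (if J = 0 then 1 else 0)) * complex_of_real (sin (a * x / r))"
proof -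
  have rn: "r \<noteq> 0" using r by simp
  show ?thesis
  proof (cases "J = 0")
    case True
    then have "NN/2 = - a" using a by simp
    then show ?thesis using True unfolding Ee_xi[OF rn] Ee_mxi[OF rn]
      by (simp add: complex_eq_iff)
  next
    case False
    then show ?thesis unfolding Ee_xi[OF rn] Ee_mxi[OF rn] by (simp add: complex_eq_iff)
  qed
qed

lemma P_val:
  "(Ee a (xi r x) + (if J = 0 then Ee (NN/2) (xi r x) else 0))
   + (Ee a (- xi r x) + (if J = 0 then Ee (NN/2) (- xi r x) else 0))
   = 2 * (1 + (if J = 0 then 1 else 0)) * complex_of_real (cos (a * x / r))"
proof -
  have rn: "r \<noteq> 0" using r by simp
  show ?thesis
  proof (cases "J = 0")
    case True
    then have "NN/2 = - a" using a by simp
    then show ?thesis using True unfolding Ee_xi[OF rn] Ee_mxi[OF rn]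
      by (simp add: complex_eq_iff)
  next
    case False
    then show ?thesis unfolding Ee_xi[OF rn] Ee_mxi[OF rn] by (simp add: complex_eq_iff)
  qed
qed

lemma shape_B:
  assumes kz: "kz \<noteq> 0"
    and hX: "\<And>ts. X ts = Qf NN J (xi r x) (ts / 2 / (2 * pi * r^2)) - Qf NN J (- xi r x) (ts / 2 / (2 * pi * r^2))"
    and hY: "\<And>ts. Y ts = Qf NN J (xi r y) (ts / 2 / (2 * pi * r^2)) - Qf NN J (- xi r y) (ts / 2 / (2 * pi * r^2))"
    and hZ: "\<And>ts. Z ts = of_real kz * Pf NN J 0 (ts / (2 * pi * r^2))"
  shows "((\<lambda>ts. (1 / Z ts) * X ts * cnj (Y ts)) \<longlongrightarrow>
     complex_of_real (4 * (1 + (if J = 0 then 1 else 0)) * sin (a * x / r) * sin (a * y / r) / kz)) at_top"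
proof -
  define d :: complex where "d = (if J = 0 then 1 else 0)"
  have lx: "((\<lambda>ts. of_real (e ts) * X ts) \<longlongrightarrow> - 2 * (1 + d) * complex_of_real (sin (a * x / r))) at_top"
  proof -
    have f: "(\<lambda>ts. of_real (e ts) * X ts) = (\<lambda>ts. of_real (e ts) * Qf NN J (xi r x) (ts / 2 / (2 * pi * r^2)) - of_real (e ts) * Qf NN J (- xi r x) (ts / 2 / (2 * pi * r^2)))"
      by (simp add: fun_eq_iff hX right_diff_distrib)
    show ?thesis using tendsto_diff[OF limQ[of "xi r x"] limQ[of "- xi r x"]] unfolding Q_val d_def[symmetric] f .
  qed
  have ly: "((\<lambda>ts. of_real (e ts) * Y ts) \<longlongrightarrow> - 2 * (1 + d) * complex_of_real (sin (a * y / r))) at_top"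
  proof -
    have f: "(\<lambda>ts. of_real (e ts) * Y ts) = (\<lambda>ts. of_real (e ts) * Qf NN J (xi r y) (ts / 2 / (2 * pi * r^2)) - of_real (e ts) * Qf NN J (- xi r y) (ts / 2 / (2 * pi * r^2)))"
      by (simp add: fun_eq_iff hY right_diff_distrib)
    show ?thesis using tendsto_diff[OF limQ[of "xi r y"] limQ[of "- xi r y"]] unfolding Q_val d_def[symmetric] f .
  qed
  have lz: "((\<lambda>ts. of_real (e ts ^ 2) * Z ts) \<longlongrightarrow> of_real kz * (1 + d)) at_top"
    using limZ[of kz] unfolding d_def[symmetric] hZ .
  have d1: "1 + d \<noteq> 0" by (simp add: d_def)
  have lim: "((\<lambda>ts. (1 / Z ts) * X ts * cnj (Y ts)) \<longlongrightarrow>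
     (- 2 * (1 + d) * complex_of_real (sin (a * x / r))) * cnj (- 2 * (1 + d) * complex_of_real (sin (a * y / r))) / (of_real kz * (1 + d))) at_top"
    by (rule term_lim[OF e_nz lx ly lz]) (use kz d1 in \<open>simp add: d_def\<close>)
  have val: "(- 2 * (1 + d) * complex_of_real (sin (a * x / r))) * cnj (- 2 * (1 + d) * complex_of_real (sin (a * y / r))) / (of_real kz * (1 + d))
    = complex_of_real (4 * (1 + (if J = 0 then 1 else 0)) * sin (a * x / r) * sin (a * y / r) / kz)"
    using kz by (cases "J = 0") (simp_all add: d_def field_simps power2_eq_square)
  show ?thesis using lim unfolding val .
qed

lemma shape_D:
  assumes kz: "kz \<noteq> 0"
    and hX: "\<And>ts. X ts = Pf NN J (xi r x) (ts / 2 / (2 * pi * r^2)) + Pf NN J (- xi r x) (ts / 2 / (2 * pi * r^2))"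
    and hY: "\<And>ts. Y ts = Pf NN J (xi r y) (ts / 2 / (2 * pi * r^2)) + Pf NN J (- xi r y) (ts / 2 / (2 * pi * r^2))"
    and hZ: "\<And>ts. Z ts = of_real kz * Pf NN J 0 (ts / (2 * pi * r^2))"
  shows "((\<lambda>ts. (1 / Z ts) * X ts * cnj (Y ts)) \<longlongrightarrow>
     complex_of_real (4 * (1 + (if J = 0 then 1 else 0)) * cos (a * x / r) * cos (a * y / r) / kz)) at_top"
proof -
  define d :: complex where "d = (if J = 0 then 1 else 0)"
  have lx: "((\<lambda>ts. of_real (e ts) * X ts) \<longlongrightarrow> 2 * (1 + d) * complex_of_real (cos (a * x / r))) at_top"
  proof -
    have f: "(\<lambda>ts. of_real (e ts) * X ts) = (\<lambda>ts. of_real (e ts) * Pf NN J (xi r x) (ts / 2 / (2 * pi * r^2)) + of_real (e ts) * Pf NN J (- xi r x) (ts / 2 / (2 * pi * r^2)))"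
      by (simp add: fun_eq_iff hX distrib_left)
    show ?thesis using tendsto_add[OF limP[of "xi r x"] limP[of "- xi r x"]] unfolding P_val d_def[symmetric] f .
  qed
  have ly: "((\<lambda>ts. of_real (e ts) * Y ts) \<longlongrightarrow> 2 * (1 + d) * complex_of_real (cos (a * y / r))) at_top"
  proof -
    have f: "(\<lambda>ts. of_real (e ts) * Y ts) = (\<lambda>ts. of_real (e ts) * Pf NN J (xi r y) (ts / 2 / (2 * pi * r^2)) + of_real (e ts) * Pf NN J (- xi r y) (ts / 2 / (2 * pi * r^2)))"
      by (simp add: fun_eq_iff hY distrib_left)
    show ?thesis using tendsto_add[OF limP[of "xi r y"] limP[of "- xi r y"]] unfolding P_val d_def[symmetric] f .
  qed
  have lz: "((\<lambda>ts. of_real (e ts ^ 2) * Z ts) \<longlongrightarrow> of_real kz * (1 + d)) at_top"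
    using limZ[of kz] unfolding d_def[symmetric] hZ .
  have d1: "1 + d \<noteq> 0" by (simp add: d_def)
  have lim: "((\<lambda>ts. (1 / Z ts) * X ts * cnj (Y ts)) \<longlongrightarrow>
     (2 * (1 + d) * complex_of_real (cos (a * x / r))) * cnj (2 * (1 + d) * complex_of_real (cos (a * y / r))) / (of_real kz * (1 + d))) at_top"
    by (rule term_lim[OF e_nz lx ly lz]) (use kz d1 in \<open>simp add: d_def\<close>)
  have val: "(2 * (1 + d) * complex_of_real (cos (a * x / r))) * cnj (2 * (1 + d) * complex_of_real (cos (a * y / r))) / (of_real kz * (1 + d))
    = complex_of_real (4 * (1 + (if J = 0 then 1 else 0)) * cos (a * x / r) * cos (a * y / r) / kz)"
    using kz by (cases "J = 0") (simp_all add: d_def field_simps power2_eq_square)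
  show ?thesis using lim unfolding val .
qed
end



lemma half: "(ts::real) - ts / 2 = ts / 2" by simp

lemma main_A:
  assumes r: "r > 0" and N: "1 \<le> N"
  shows "((\<lambda>ts. kernel_t A N r (ts / 2) ts x y) \<longlongrightarrow> complex_of_real (K_A N r x y)) at_top"
proof -
  define u where "u = (x - y) / (2 * r)"
  have T: "((\<lambda>ts. (1 / mfun A N r n ts) * Mfun A N r n x (ts / 2) * cnj (Mfun A N r n y (ts - ts / 2)))
     \<longlongrightarrow> cis ((2 * real n - 1 - real N) * u) / of_real (2 * pi * r)) at_top" if n: "n \<in> {1..N}" for n
  proof -
    interpret setting r "calN A N" "Jfun A n" "Jfun A n - calN A N / 2"
      by unfold_locales (use n r N in \<open>auto simp: calN_def Jfun_def\<close>)
    have lim: "((\<lambda>ts. (1 / mfun A N r n ts) * Mfun A N r n x (ts / 2) * cnj (Mfun A N r n y (ts - ts / 2)))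
     \<longlongrightarrow> cis ((Jfun A n - calN A N / 2) * x / r - (Jfun A n - calN A N / 2) * y / r) / of_real (2 * pi * r)) at_top"
    proof (rule shape_A)
      have "real n \<ge> 1" using n by simp
      then show "Jfun A n \<noteq> 0" unfolding Jfun_def by simp
      show "2 * pi * r \<noteq> 0" using r by simp
      show "Mfun A N r n x (ts / 2) = Pf (calN A N) (Jfun A n) (xi r x) (ts / 2 / (2 * pi * r^2))" for ts
        by (rule Mfun_A)
      show "Mfun A N r n y (ts - ts / 2) = Pf (calN A N) (Jfun A n) (xi r y) (ts / 2 / (2 * pi * r^2))" for ts
        unfolding half by (rule Mfun_A)
      show "mfun A N r n ts = of_real (2 * pi * r) * Pf (calN A N) (Jfun A n) 0 (ts / (2 * pi * r^2))" for ts
        by (subst mfun_gen) simp_all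
    qed
    have "(Jfun A n - calN A N / 2) * x / r - (Jfun A n - calN A N / 2) * y / r = (2 * real n - 1 - real N) * u"
      using r by (simp add: u_def Jfun_def calN_def field_simps)
    then show ?thesis using lim by simp
  qed
  have "((\<lambda>ts. kernel_t A N r (ts / 2) ts x y) \<longlongrightarrow> (\<Sum>n=1..N. cis ((2 * real n - 1 - real N) * u) / of_real (2 * pi * r))) at_top"
    unfolding kernel_t_def by (rule tendsto_sum) (rule T)
  moreover have "(\<Sum>n=1..N. cis ((2 * real n - 1 - real N) * u) / of_real (2 * pi * r)) = complex_of_real (K_A N r x y)"
    unfolding sum_divide_distrib[symmetric] sum_A K_A_def u_def by simp
  ultimately show ?thesis by simp
qed


lemma termC:
  assumes R: "R = C \<or> R = Cv \<or> R = BC" and r: "r > 0" and N: "1 \<le> N" and n: "n \<in> {1..N}"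
  shows "((\<lambda>ts. (1 / mfun R N r n ts) * Mfun R N r n x (ts / 2) * cnj (Mfun R N r n y (ts - ts / 2)))
     \<longlongrightarrow> complex_of_real (4 * sin ((Jfun R n - calN R N / 2) * x / r) * sin ((Jfun R n - calN R N / 2) * y / r) / (2 * pi * r))) at_top"
proof -
  have n1: "real n \<ge> 1" "real n \<le> real N" using n by auto
  interpret setting r "calN R N" "Jfun R n" "Jfun R n - calN R N / 2"
    by unfold_locales (use n1 R r N in \<open>auto simp: calN_def Jfun_def\<close>)
  show ?thesis
  proof (rule shape_C)
    show "Jfun R n \<noteq> 0" using R n1 by (auto simp: Jfun_def)
    show "2 * pi * r \<noteq> 0" using r by simp
    show "Mfun R N r n x (ts / 2) = Pf (calN R N) (Jfun R n) (xi r x) (ts / 2 / (2 * pi * r^2)) - Pf (calN R N) (Jfun R n) (- xi r x) (ts / 2 / (2 * pi * r^2))" for ts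
      by (rule Mfun_CC[OF R])
    show "Mfun R N r n y (ts - ts / 2) = Pf (calN R N) (Jfun R n) (xi r y) (ts / 2 / (2 * pi * r^2)) - Pf (calN R N) (Jfun R n) (- xi r y) (ts / 2 / (2 * pi * r^2))" for ts
      unfolding half by (rule Mfun_CC[OF R])
    show "mfun R N r n ts = of_real (2 * pi * r) * Pf (calN R N) (Jfun R n) 0 (ts / (2 * pi * r^2))" for ts
      by (subst mfun_gen) (use R in auto)
  qed
qed

lemma termB:
  assumes R: "R = B \<or> R = Bv" and r: "r > 0" and N: "1 \<le> N" and n: "n \<in> {1..N}"
  shows "((\<lambda>ts. (1 / mfun R N r n ts) * Mfun R N r n x (ts / 2) * cnj (Mfun R N r n y (ts - ts / 2)))
     \<longlongrightarrow> complex_of_real (4 * sin ((Jfun R n - calN R N / 2) * x / r) * sin ((Jfun R n - calN R N / 2) * y / r) / (2 * pi * r))) at_top"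
proof -
  have n1: "real n \<ge> 1" "real n \<le> real N" using n by auto
  interpret setting r "calN R N" "Jfun R n" "Jfun R n - calN R N / 2"
    by unfold_locales (use n1 R r N in \<open>auto simp: calN_def Jfun_def\<close>)
  define kz where "kz = (if n = 1 then 4 * pi * r else 2 * pi * r)"
  have J0: "Jfun R n = 0 \<longleftrightarrow> n = 1" using R n1 by (auto simp: Jfun_def)
  have lim: "((\<lambda>ts. (1 / mfun R N r n ts) * Mfun R N r n x (ts / 2) * cnj (Mfun R N r n y (ts - ts / 2)))
     \<longlongrightarrow> complex_of_real (4 * (1 + (if Jfun R n = 0 then 1 else 0)) * sin ((Jfun R n - calN R N / 2) * x / r) * sin ((Jfun R n - calN R N / 2) * y / r) / kz)) at_top"
  proof (rule shape_B)
    show "kz \<noteq> 0" using r by (simp add: kz_def)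
    show "Mfun R N r n x (ts / 2) = Qf (calN R N) (Jfun R n) (xi r x) (ts / 2 / (2 * pi * r^2)) - Qf (calN R N) (Jfun R n) (- xi r x) (ts / 2 / (2 * pi * r^2))" for ts
      by (rule Mfun_BB[OF R])
    show "Mfun R N r n y (ts - ts / 2) = Qf (calN R N) (Jfun R n) (xi r y) (ts / 2 / (2 * pi * r^2)) - Qf (calN R N) (Jfun R n) (- xi r y) (ts / 2 / (2 * pi * r^2))" for ts
      unfolding half by (rule Mfun_BB[OF R])
    show "mfun R N r n ts = of_real kz * Pf (calN R N) (Jfun R n) 0 (ts / (2 * pi * r^2))" for ts
    proof (cases "n = 1")
      case True
      then have "Jfun R n = 0" using J0 by simp
      moreover have "mfun R N r 1 ts = 4 * of_real (pi * r) * Pf (calN R N) 0 0 (ts / (2 * pi * r^2))"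
        by (rule mfun_1) (use R in auto)
      ultimately show ?thesis using True by (simp add: kz_def)
    next
      case False
      then show ?thesis by (subst mfun_gen) (use R in \<open>auto simp: kz_def\<close>)
    qed
  qed
  have "4 * (1 + (if Jfun R n = 0 then 1 else 0)) * sin ((Jfun R n - calN R N / 2) * x / r) * sin ((Jfun R n - calN R N / 2) * y / r) / kz
     = 4 * sin ((Jfun R n - calN R N / 2) * x / r) * sin ((Jfun R n - calN R N / 2) * y / r) / (2 * pi * r)"
    using r J0 by (simp add: kz_def)
  then show ?thesis using lim by simp
qed

lemma termD:
  assumes r: "r > 0" and N: "2 \<le> N" and n: "n \<in> {1..N}"
  shows "((\<lambda>ts. (1 / mfun D N r n ts) * Mfun D N r n x (ts / 2) * cnj (Mfun D N r n y (ts - ts / 2)))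
     \<longlongrightarrow> complex_of_real (4 * cos ((real n - real N) * x / r) * cos ((real n - real N) * y / r) / (2 * pi * r)
           - (if n = N then 1 / (pi * r) else 0))) at_top"
proof -
  have n1: "real n \<ge> 1" "real n \<le> real N" using n by auto
  interpret setting r "calN D N" "Jfun D n" "Jfun D n - calN D N / 2"
    by unfold_locales (use n1 r N in \<open>auto simp: calN_def Jfun_def\<close>)
  define kz where "kz = (if n = 1 \<or> n = N then 4 * pi * r else 2 * pi * r)"
  have J0: "Jfun D n = 0 \<longleftrightarrow> n = 1" using n1 by (auto simp: Jfun_def)
  have aa: "Jfun D n - calN D N / 2 = real n - real N" by (simp add: Jfun_def calN_def field_simps)
  have lim: "((\<lambda>ts. (1 / mfun D N r n ts) * Mfun D N r n x (ts / 2) * cnj (Mfun D N r n y (ts - ts / 2)))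
     \<longlongrightarrow> complex_of_real (4 * (1 + (if Jfun D n = 0 then 1 else 0)) * cos ((Jfun D n - calN D N / 2) * x / r) * cos ((Jfun D n - calN D N / 2) * y / r) / kz)) at_top"
  proof (rule shape_D)
    show "kz \<noteq> 0" using r by (simp add: kz_def)
    show "Mfun D N r n x (ts / 2) = Pf (calN D N) (Jfun D n) (xi r x) (ts / 2 / (2 * pi * r^2)) + Pf (calN D N) (Jfun D n) (- xi r x) (ts / 2 / (2 * pi * r^2))" for ts
      by (rule Mfun_D)
    show "Mfun D N r n y (ts - ts / 2) = Pf (calN D N) (Jfun D n) (xi r y) (ts / 2 / (2 * pi * r^2)) + Pf (calN D N) (Jfun D n) (- xi r y) (ts / 2 / (2 * pi * r^2))" for ts
      unfolding half by (rule Mfun_D)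
    show "mfun D N r n ts = of_real kz * Pf (calN D N) (Jfun D n) 0 (ts / (2 * pi * r^2))" for ts
    proof (cases "n = 1")
      case True
      then have "Jfun D n = 0" using J0 by simp
      moreover have "mfun D N r 1 ts = 4 * of_real (pi * r) * Pf (calN D N) 0 0 (ts / (2 * pi * r^2))"
        by (rule mfun_1) simp
      ultimately show ?thesis using True by (simp add: kz_def)
    next
      case False
      show ?thesis
      proof (cases "n = N")
        case True
        have "Jfun D n = real N - 1" using True by (simp add: Jfun_def)
        then show ?thesis using True N by (simp add: mfun_DN kz_def)
      next
        case False2: False
        show ?thesis by (subst mfun_gen) (use False False2 in \<open>auto simp: kz_def\<close>)
      qed
    qed
  qed
  have "4 * (1 + (if Jfun D n = 0 then 1 else 0)) * cos ((Jfun D n - calN D N / 2) * x / r) * cos ((Jfun D n - calN D N / 2) * y / r) / kz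
     = 4 * cos ((real n - real N) * x / r) * cos ((real n - real N) * y / r) / (2 * pi * r)
           - (if n = N then 1 / (pi * r) else 0)"
    using r J0 N unfolding aa by (auto simp: kz_def field_simps)
  then show ?thesis using lim by simp
qed


lemma kern_lim:
  assumes "\<And>n. n \<in> {1..N} \<Longrightarrow> ((\<lambda>ts. (1 / mfun R N r n ts) * Mfun R N r n x (ts / 2) * cnj (Mfun R N r n y (ts - ts / 2))) \<longlongrightarrow> T n) at_top"
  shows "((\<lambda>ts. kernel_t R N r (ts / 2) ts x y) \<longlongrightarrow> (\<Sum>n=1..N. T n)) at_top"
  unfolding kernel_t_def by (rule tendsto_sum) (rule assms)

lemma sumconv:
  assumes "\<And>n. n \<in> {1..N} \<Longrightarrow> Jfun R n - calN R N / 2 = real n - real N - c"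
    and "(\<Sum>n=1..N. 4 * f ((real n - real N - c) * x / r) * f ((real n - real N - c) * y / r) / (2 * pi * r)) = K"
  shows "(\<Sum>n=1..N. complex_of_real (4 * f ((Jfun R n - calN R N / 2) * x / r) * f ((Jfun R n - calN R N / 2) * y / r) / (2 * pi * r))) = complex_of_real K"
proof -
  have "(\<Sum>n=1..N. 4 * f ((Jfun R n - calN R N / 2) * x / r) * f ((Jfun R n - calN R N / 2) * y / r) / (2 * pi * r))
     = (\<Sum>n=1..N. 4 * f ((real n - real N - c) * x / r) * f ((real n - real N - c) * y / r) / (2 * pi * r))"
    by (intro sum.cong refl) (simp add: assms(1))
  then show ?thesis unfolding of_real_sum[symmetric] assms(2) by simp
qed

theorem corollary3p4:
  fixes R :: root_type and N :: nat and r x y :: real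
  assumes "0 < r" and "1 \<le> N" and "R = D \<Longrightarrow> 2 \<le> N"
    and "x \<in> state_space R r" and "y \<in> state_space R r"
  shows "((\<lambda>ts. kernel_t R N r (ts / 2) ts x y)
            \<longlongrightarrow> complex_of_real (limit_kernel R N r x y)) at_top"
proof -
  have rn: "r \<noteq> 0" using assms(1) by simp
  show ?thesis
  proof (cases R)
    case A
    then show ?thesis using main_A[OF assms(1,2)] by (simp add: limit_kernel_def)
  next
    case B
    have lim: "((\<lambda>ts. kernel_t B N r (ts / 2) ts x y) \<longlongrightarrow>
       (\<Sum>n=1..N. complex_of_real (4 * sin ((Jfun B n - calN B N / 2) * x / r) * sin ((Jfun B n - calN B N / 2) * y / r) / (2 * pi * r)))) at_top"
      by (rule kern_lim, rule termB) (use assms(1,2) in auto)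
    have "(\<Sum>n=1..N. complex_of_real (4 * sin ((Jfun B n - calN B N / 2) * x / r) * sin ((Jfun B n - calN B N / 2) * y / r) / (2 * pi * r))) = complex_of_real (K_B N r x y)"
      by (rule sumconv[where c="1/2"], simp add: Jfun_def calN_def field_simps, rule sum_B[OF rn])
    then have "((\<lambda>ts. kernel_t B N r (ts / 2) ts x y) \<longlongrightarrow> complex_of_real (K_B N r x y)) at_top"
      using lim by simp
    then show ?thesis using B by (simp add: limit_kernel_def)
  next
    case Bv
    have lim: "((\<lambda>ts. kernel_t Bv N r (ts / 2) ts x y) \<longlongrightarrow>
       (\<Sum>n=1..N. complex_of_real (4 * sin ((Jfun Bv n - calN Bv N / 2) * x / r) * sin ((Jfun Bv n - calN Bv N / 2) * y / r) / (2 * pi * r)))) at_top"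
      by (rule kern_lim, rule termB) (use assms(1,2) in auto)
    have "(\<Sum>n=1..N. complex_of_real (4 * sin ((Jfun Bv n - calN Bv N / 2) * x / r) * sin ((Jfun Bv n - calN Bv N / 2) * y / r) / (2 * pi * r))) = complex_of_real (K_C N r x y)"
      by (rule sumconv[where c="1"], simp add: Jfun_def calN_def field_simps, rule sum_C[OF rn])
    then have "((\<lambda>ts. kernel_t Bv N r (ts / 2) ts x y) \<longlongrightarrow> complex_of_real (K_C N r x y)) at_top"
      using lim by simp
    then show ?thesis using Bv by (simp add: limit_kernel_def)
  next
    case C
    have lim: "((\<lambda>ts. kernel_t C N r (ts / 2) ts x y) \<longlongrightarrow>
       (\<Sum>n=1..N. complex_of_real (4 * sin ((Jfun C n - calN C N / 2) * x / r) * sin ((Jfun C n - calN C N / 2) * y / r) / (2 * pi * r)))) at_top"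
      by (rule kern_lim, rule termC) (use assms(1,2) in auto)
    have "(\<Sum>n=1..N. complex_of_real (4 * sin ((Jfun C n - calN C N / 2) * x / r) * sin ((Jfun C n - calN C N / 2) * y / r) / (2 * pi * r))) = complex_of_real (K_C N r x y)"
      by (rule sumconv[where c="1"], simp add: Jfun_def calN_def field_simps, rule sum_C[OF rn])
    then have "((\<lambda>ts. kernel_t C N r (ts / 2) ts x y) \<longlongrightarrow> complex_of_real (K_C N r x y)) at_top"
      using lim by simp
    then show ?thesis using C by (simp add: limit_kernel_def)
  next
    case Cv
    have lim: "((\<lambda>ts. kernel_t Cv N r (ts / 2) ts x y) \<longlongrightarrow>
       (\<Sum>n=1..N. complex_of_real (4 * sin ((Jfun Cv n - calN Cv N / 2) * x / r) * sin ((Jfun Cv n - calN Cv N / 2) * y / r) / (2 * pi * r)))) at_top"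
      by (rule kern_lim, rule termC) (use assms(1,2) in auto)
    have "(\<Sum>n=1..N. complex_of_real (4 * sin ((Jfun Cv n - calN Cv N / 2) * x / r) * sin ((Jfun Cv n - calN Cv N / 2) * y / r) / (2 * pi * r))) = complex_of_real (K_B N r x y)"
      by (rule sumconv[where c="1/2"], simp add: Jfun_def calN_def field_simps, rule sum_B[OF rn])
    then have "((\<lambda>ts. kernel_t Cv N r (ts / 2) ts x y) \<longlongrightarrow> complex_of_real (K_B N r x y)) at_top"
      using lim by simp
    then show ?thesis using Cv by (simp add: limit_kernel_def)
  next
    case BC
    have lim: "((\<lambda>ts. kernel_t BC N r (ts / 2) ts x y) \<longlongrightarrow>
       (\<Sum>n=1..N. complex_of_real (4 * sin ((Jfun BC n - calN BC N / 2) * x / r) * sin ((Jfun BC n - calN BC N / 2) * y / r) / (2 * pi * r)))) at_top"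
      by (rule kern_lim, rule termC) (use assms(1,2) in auto)
    have "(\<Sum>n=1..N. complex_of_real (4 * sin ((Jfun BC n - calN BC N / 2) * x / r) * sin ((Jfun BC n - calN BC N / 2) * y / r) / (2 * pi * r))) = complex_of_real (K_B N r x y)"
      by (rule sumconv[where c="1/2"], simp add: Jfun_def calN_def field_simps, rule sum_B[OF rn])
    then have "((\<lambda>ts. kernel_t BC N r (ts / 2) ts x y) \<longlongrightarrow> complex_of_real (K_B N r x y)) at_top"
      using lim by simp
    then show ?thesis using BC by (simp add: limit_kernel_def)
  next
    case D
    have N2: "2 \<le> N" using assms(3) D by simp
    have lim: "((\<lambda>ts. kernel_t D N r (ts / 2) ts x y) \<longlongrightarrow>
       (\<Sum>n=1..N. complex_of_real (4 * cos ((real n - real N) * x / r) * cos ((real n - real N) * y / r) / (2 * pi * r)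
           - (if n = N then 1 / (pi * r) else 0)))) at_top"
      by (rule kern_lim[OF termD[OF assms(1) N2]])
    have "(\<Sum>n=1..N. (4 * cos ((real n - real N) * x / r) * cos ((real n - real N) * y / r) / (2 * pi * r)
           - (if n = N then 1 / (pi * r) else 0)))
       = (\<Sum>n=1..N. 4 * cos ((real n - real N) * x / r) * cos ((real n - real N) * y / r) / (2 * pi * r))
         - (\<Sum>n=1..N. (if n = N then 1 / (pi * r) else 0))"
      by (rule sum_subtractf)
    also have "(\<Sum>n=1..N. (if n = N then 1 / (pi * r) else 0)) = 1 / (pi * r)"
      using assms(2) by simp
    finally have "(\<Sum>n=1..N. (4 * cos ((real n - real N) * x / r) * cos ((real n - real N) * y / r) / (2 * pi * r)
           - (if n = N then 1 / (pi * r) else 0))) = K_D N r x y"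
      using sum_D0[OF rn, of N x y] by simp
    then have "(\<Sum>n=1..N. complex_of_real (4 * cos ((real n - real N) * x / r) * cos ((real n - real N) * y / r) / (2 * pi * r)
           - (if n = N then 1 / (pi * r) else 0))) = complex_of_real (K_D N r x y)"
      unfolding of_real_sum[symmetric] by simp
    then show ?thesis using lim D by (simp add: limit_kernel_def)
  qed
qed


end
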